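(* Consider the two-period AI value chain game described in the context, and suppose that in period 2 both developers choose openness $\bar\eta$ (so $\eta_2=\tilde\eta_2=\bar\eta$) and the incumbent charges $w_2=w_L$. Define $$\bar{\eta}_H = \frac{k(\theta-w_H)}{2c-k(\theta-w_H)},\qquad \bar{\eta}_L = \frac{k(\theta-w_L)}{2c-k(\theta-w_L)}.$$ (a) $\bar\eta_H\le\bar\eta_L$, and: if the incumbent charges $w_1=w_H$ in period 1, the deployer selects the incumbent in period 2 if and only if $\eta_1\le\bar\eta_H$; if the incumbent charges $w_1=w_L$ in period 1, the deployer selects the incumbent in period 2 if and only if $\eta_1\le\bar\eta_L$. (b) Conditional on the period-2 outcome, the incumbent's total profit is increasing in $\eta_1$: with $\alpha_1=\frac{(1+\eta_1)(\theta-w_1)}{2c}$ and $\alpha_2=\frac{(1+k\alpha_1)(1+\bar\eta)(\theta-w_L)}{2c}$ (the deployer's optimal period-2 effort/engagement when it selects the incumbent), both $\pi_{win}(w_1,\eta_1)=w_1\alpha_1+w_L\alpha_2$ and $\pi_{lose}(w_1,\eta_1)=w_1\alpha_1$ are monotonically increasing in $\eta_1\in[0,\bar\eta]$.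
   Context: Two-period game $t\in\{1,2\}$ with an incumbent developer (developer 1), a deployer, an entrant developer (developer 2), and a unit mass of users. Parameters: $\theta>0$, $c>0$, license fees $0\le w_L\le w_H\le\theta/2$, openness cap $\bar\eta>0$, data flywheel parameter $k\ge 0$. In each period users choose engagement $\alpha_t$ maximizing $Q_t\alpha_t-\alpha_t^2/2$, so $\alpha_t=Q_t$, where $Q_t\ge0$ is the deployer's fine-tuning effort (quality). Period 1: the incumbent chooses a license fee $w_1\in\{w_H,w_L\}$ and openness $\eta_1\in[0,\bar\eta]$; the deployer chooses $Q_1$ to maximize $(\theta-w_1)\alpha_1-\frac{cQ_1^2}{1+\eta_1}$. Period 2: the incumbent chooses $w_2\in\{w_H,w_L\}$ and $\eta_2\in[0,\bar\eta]$; the entrant charges $\tilde w_2=w_L$ and chooses $\tilde\eta_2\in[0,\bar\eta]$. The deployer, for each developer, chooses its effort optimally: with the incumbent its period-2 profit is $(\theta-w_2)Q_2-\frac{cQ_2^2}{(1+k\alpha_1)(1+\eta_2)}$, with the entrant it is $(\theta-w_L)Q_2-\frac{cQ_2^2}{(1+\eta_1)(1+\tilde\eta_2)}$; it selects the incumbent iff the incumbent's optimized profit is at least the entrant's. The incumbent's payoff is $w_1\alpha_1+w_2\alpha_2$ if selected in period 2 and $w_1\alpha_1$ otherwise; the entrant's payoff is $w_L\alpha_2$ if selected and $0$ otherwise. Standing assumption: $k\le\min\Big\{\frac{2c\bar\eta}{(1+\bar\eta)(\theta-w_L)},\ \frac{2c(2\theta-w_H-w_L)(w_H-w_L)}{(\theta-w_H)^2(\theta-w_L)}\Big\}$.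 *)

theory Defs
  imports Complex_Main
begin

text \<open>Users' engagement equals the deployer's effort (alpha_t = Q_t), so engagement
  quantities are identified with the corresponding efforts.\<close>

definition dep1_profit :: "real \<Rightarrow> real \<Rightarrow> real \<Rightarrow> real \<Rightarrow> real \<Rightarrow> real" where
  "dep1_profit \<theta> c w \<eta> Q = (\<theta> - w) * Q - c * Q\<^sup>2 / (1 + \<eta>)"

definition dep2_inc_profit :: "real \<Rightarrow> real \<Rightarrow> real \<Rightarrow> real \<Rightarrow> real \<Rightarrow> real \<Rightarrow> real \<Rightarrow> real" where
  "dep2_inc_profit \<theta> c k \<alpha>1 w2 \<eta>2 Q = (\<theta> - w2) * Q - c * Q\<^sup>2 / ((1 + k * \<alpha>1) * (1 + \<eta>2))"

definition dep2_ent_profit :: "real \<Rightarrow> real \<Rightarrow> real \<Rightarrow> real \<Rightarrow> real \<Rightarrow> real \<Rightarrow> real" where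
  "dep2_ent_profit \<theta> c wL \<eta>1 \<eta>2t Q = (\<theta> - wL) * Q - c * Q\<^sup>2 / ((1 + \<eta>1) * (1 + \<eta>2t))"

definition opt_value :: "(real \<Rightarrow> real) \<Rightarrow> real" where
  "opt_value f = (SUP Q\<in>{0..}. f Q)"

definition selects_incumbent ::
  "real \<Rightarrow> real \<Rightarrow> real \<Rightarrow> real \<Rightarrow> real \<Rightarrow> real \<Rightarrow> real \<Rightarrow> real \<Rightarrow> real \<Rightarrow> bool" where
  "selects_incumbent \<theta> c k wL \<alpha>1 \<eta>1 w2 \<eta>2 \<eta>2t \<longleftrightarrow>
     opt_value (dep2_inc_profit \<theta> c k \<alpha>1 w2 \<eta>2) \<ge> opt_value (dep2_ent_profit \<theta> c wL \<eta>1 \<eta>2t)"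

definition eta_thr :: "real \<Rightarrow> real \<Rightarrow> real \<Rightarrow> real \<Rightarrow> real" where
  "eta_thr \<theta> c k w = k * (\<theta> - w) / (2 * c - k * (\<theta> - w))"

end

theory Submission
  imports Defs
begin

lemma quad_id:
  fixes a c D Q :: real
  assumes "c > 0" "D > 0"
  shows "a * Q - c * Q\<^sup>2 / D = a\<^sup>2 * D / (4 * c) - c * (Q - a * D / (2 * c))\<^sup>2 / D"
  using assms by (simp add: field_simps power2_eq_square)

lemma quad_opt:
  fixes a c D :: real
  assumes "c > 0" "D > 0" "a \<ge> 0"
  shows "opt_value (\<lambda>Q. a * Q - c * Q\<^sup>2 / D) = a\<^sup>2 * D / (4 * c)"
proof -
  let ?f = "\<lambda>Q. a * Q - c * Q\<^sup>2 / D"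
  have le: "?f Q \<le> a\<^sup>2 * D / (4 * c)" for Q
    using quad_id[OF assms(1,2), of a Q] assms by (simp add: divide_nonneg_pos)
  have eq: "?f (a * D / (2 * c)) = a\<^sup>2 * D / (4 * c)"
    using quad_id[OF assms(1,2), of a "a * D / (2 * c)"] by simp
  have mem: "a * D / (2 * c) \<in> {0..}" using assms by simp
  show ?thesis unfolding opt_value_def
    by (rule cSup_eq_maximum) (use le eq mem in \<open>auto intro: image_eqI[of _ _ "a * D / (2 * c)"]\<close>)
qed

lemma maximizer:
  fixes a c D Q1 :: real
  assumes "c > 0" "D > 0" "a \<ge> 0"
    and "\<forall>Q\<ge>0. a * Q - c * Q\<^sup>2 / D \<le> a * Q1 - c * Q1\<^sup>2 / D"
  shows "Q1 = a * D / (2 * c)"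
proof -
  have "a * D / (2 * c) \<ge> 0" using assms by simp
  then have "a * (a * D / (2 * c)) - c * (a * D / (2 * c))\<^sup>2 / D \<le> a * Q1 - c * Q1\<^sup>2 / D"
    using assms(4) by blast
  then have "c * (Q1 - a * D / (2 * c))\<^sup>2 / D \<le> 0"
    using quad_id[OF assms(1,2), of a Q1] quad_id[OF assms(1,2), of a "a * D / (2 * c)"] by simp
  moreover have "c * (Q1 - a * D / (2 * c))\<^sup>2 / D \<ge> 0" using assms by simp
  ultimately have "c * (Q1 - a * D / (2 * c))\<^sup>2 / D = 0" by linarith
  then show ?thesis using assms by simp
qed

lemma select_char:
  fixes \<theta> c k wL w \<eta>1 \<eta>bar Q1 :: real
  assumes hc: "c > 0" and hwL: "wL < \<theta>" and hw: "w < \<theta>" and h1: "0 \<le> \<eta>1" and hb: "\<eta>bar > 0"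
    and hk0: "k \<ge> 0" and kw: "k * (\<theta> - w) < 2 * c"
    and hq: "0 \<le> Q1"
    and hmax: "\<forall>Q\<ge>0. dep1_profit \<theta> c w \<eta>1 Q \<le> dep1_profit \<theta> c w \<eta>1 Q1"
  shows "selects_incumbent \<theta> c k wL Q1 \<eta>1 wL \<eta>bar \<eta>bar \<longleftrightarrow> \<eta>1 \<le> eta_thr \<theta> c k w"
proof -
  have Q1: "Q1 = (\<theta> - w) * (1 + \<eta>1) / (2 * c)"
    using maximizer[OF hc, of "1 + \<eta>1" "\<theta> - w" Q1] hmax h1 hw unfolding dep1_profit_def by simp
  have D1: "(1 + k * Q1) * (1 + \<eta>bar) > 0" using hk0 hq hb
    by (simp add: add_pos_nonneg)
  have D2: "(1 + \<eta>1) * (1 + \<eta>bar) > 0" using h1 hb by simp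
  have o1: "opt_value (dep2_inc_profit \<theta> c k Q1 wL \<eta>bar) = (\<theta> - wL)\<^sup>2 * ((1 + k * Q1) * (1 + \<eta>bar)) / (4 * c)"
    unfolding dep2_inc_profit_def using quad_opt[OF hc D1, of "\<theta> - wL"] hwL by simp
  have o2: "opt_value (dep2_ent_profit \<theta> c wL \<eta>1 \<eta>bar) = (\<theta> - wL)\<^sup>2 * ((1 + \<eta>1) * (1 + \<eta>bar)) / (4 * c)"
    unfolding dep2_ent_profit_def using quad_opt[OF hc D2, of "\<theta> - wL"] hwL by simp
  have p: "(\<theta> - wL)\<^sup>2 * (1 + \<eta>bar) / (4 * c) > 0" using hwL hb hc by simp
  have "selects_incumbent \<theta> c k wL Q1 \<eta>1 wL \<eta>bar \<eta>bar \<longleftrightarrow>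
      (1 + \<eta>1) * ((\<theta> - wL)\<^sup>2 * (1 + \<eta>bar) / (4 * c)) \<le> (1 + k * Q1) * ((\<theta> - wL)\<^sup>2 * (1 + \<eta>bar) / (4 * c))"
    unfolding selects_incumbent_def o1 o2 by (simp add: algebra_simps)
  also have "\<dots> \<longleftrightarrow> \<eta>1 \<le> k * Q1" using p mult_le_cancel_right_pos[OF p] by simp
  also have "\<dots> \<longleftrightarrow> \<eta>1 * (2 * c) \<le> k * (\<theta> - w) * (1 + \<eta>1)"
    unfolding Q1 using hc by (simp add: field_simps)
  also have "\<dots> \<longleftrightarrow> \<eta>1 * (2 * c - k * (\<theta> - w)) \<le> k * (\<theta> - w)"
    by (simp add: algebra_simps)
  also have "\<dots> \<longleftrightarrow> \<eta>1 \<le> eta_thr \<theta> c k w"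
    unfolding eta_thr_def using kw by (simp add: pos_le_divide_eq)
  finally show ?thesis .
qed

theorem lemma1:
  fixes \<theta> c wL wH \<eta>bar k :: real
  assumes h\<theta>: "\<theta> > 0" and hc: "c > 0"
    and hw: "0 \<le> wL" "wL \<le> wH" "wH \<le> \<theta> / 2"
    and h\<eta>: "\<eta>bar > 0" and hk0: "k \<ge> 0"
    and hk1: "k \<le> 2 * c * \<eta>bar / ((1 + \<eta>bar) * (\<theta> - wL))"
    and hk2: "k \<le> 2 * c * (2 * \<theta> - wH - wL) * (wH - wL) / ((\<theta> - wH)\<^sup>2 * (\<theta> - wL))"
  shows
    "eta_thr \<theta> c k wH \<le> eta_thr \<theta> c k wL
     \<and> (\<forall>\<eta>1 Q1. 0 \<le> \<eta>1 \<and> \<eta>1 \<le> \<eta>bar \<and> 0 \<le> Q1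
          \<and> (\<forall>Q\<ge>0. dep1_profit \<theta> c wH \<eta>1 Q \<le> dep1_profit \<theta> c wH \<eta>1 Q1)
          \<longrightarrow> (selects_incumbent \<theta> c k wL Q1 \<eta>1 wL \<eta>bar \<eta>bar \<longleftrightarrow> \<eta>1 \<le> eta_thr \<theta> c k wH))
     \<and> (\<forall>\<eta>1 Q1. 0 \<le> \<eta>1 \<and> \<eta>1 \<le> \<eta>bar \<and> 0 \<le> Q1
          \<and> (\<forall>Q\<ge>0. dep1_profit \<theta> c wL \<eta>1 Q \<le> dep1_profit \<theta> c wL \<eta>1 Q1)
          \<longrightarrow> (selects_incumbent \<theta> c k wL Q1 \<eta>1 wL \<eta>bar \<eta>bar \<longleftrightarrow> \<eta>1 \<le> eta_thr \<theta> c k wL))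
     \<and> (\<forall>w1\<in>{wH, wL}.
          mono_on {0..\<eta>bar} (\<lambda>\<eta>1.
            let \<alpha>1 = (1 + \<eta>1) * (\<theta> - w1) / (2 * c);
                \<alpha>2 = (1 + k * \<alpha>1) * (1 + \<eta>bar) * (\<theta> - wL) / (2 * c)
            in w1 * \<alpha>1 + wL * \<alpha>2)
        \<and> mono_on {0..\<eta>bar} (\<lambda>\<eta>1.
            let \<alpha>1 = (1 + \<eta>1) * (\<theta> - w1) / (2 * c) in w1 * \<alpha>1))"
proof -
  have tL: "wL < \<theta>" and tH: "wH < \<theta>" using hw h\<theta> by linarith+
  have "2 * c * \<eta>bar / ((1 + \<eta>bar) * (\<theta> - wL)) * (\<theta> - wL) < 2 * c"
  proof -
    have "2 * c * \<eta>bar / ((1 + \<eta>bar) * (\<theta> - wL)) * (\<theta> - wL) = 2 * c * (\<eta>bar / (1 + \<eta>bar))"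
    proof -
      have "(1 + \<eta>bar) \<noteq> 0" "\<theta> - wL \<noteq> 0" using tL h\<eta> by auto
      then show ?thesis by simp
    qed
    also have "\<dots> < 2 * c" using hc h\<eta> by (simp add: divide_less_eq)
    finally show ?thesis .
  qed
  then have kL: "k * (\<theta> - wL) < 2 * c"
    using mult_right_mono[OF hk1, of "\<theta> - wL"] tL by linarith
  have le: "k * (\<theta> - wH) \<le> k * (\<theta> - wL)" using hk0 hw by (simp add: mult_left_mono)
  then have kH: "k * (\<theta> - wH) < 2 * c" using kL by linarith
  have kH0: "0 \<le> k * (\<theta> - wH)" using hk0 tH by simp
  have A: "eta_thr \<theta> c k wH \<le> eta_thr \<theta> c k wL"
    unfolding eta_thr_def
    using kH kL le kH0 by (simp add: frac_le divide_simps) (smt (verit) mult_left_mono mult_right_mono)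
  have B: "\<forall>w1\<in>{wH, wL}.
          mono_on {0..\<eta>bar} (\<lambda>\<eta>1.
            let \<alpha>1 = (1 + \<eta>1) * (\<theta> - w1) / (2 * c);
                \<alpha>2 = (1 + k * \<alpha>1) * (1 + \<eta>bar) * (\<theta> - wL) / (2 * c)
            in w1 * \<alpha>1 + wL * \<alpha>2)
        \<and> mono_on {0..\<eta>bar} (\<lambda>\<eta>1.
            let \<alpha>1 = (1 + \<eta>1) * (\<theta> - w1) / (2 * c) in w1 * \<alpha>1)"
  proof
    fix w1 assume "w1 \<in> {wH, wL}"
    then have w1: "0 \<le> w1" "w1 < \<theta>" using hw tL tH by auto
    have a1: "(1 + x) * (\<theta> - w1) / (2 * c) \<le> (1 + y) * (\<theta> - w1) / (2 * c)" if "x \<le> y" for x y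
      using that w1 hc by (simp add: divide_right_mono mult_right_mono)
    have a2: "(1 + k * ((1 + x) * (\<theta> - w1) / (2 * c))) * (1 + \<eta>bar) * (\<theta> - wL) / (2 * c)
        \<le> (1 + k * ((1 + y) * (\<theta> - w1) / (2 * c))) * (1 + \<eta>bar) * (\<theta> - wL) / (2 * c)" if "x \<le> y" for x y
    proof -
      have "k * ((1 + x) * (\<theta> - w1) / (2 * c)) \<le> k * ((1 + y) * (\<theta> - w1) / (2 * c))"
        using mult_left_mono[OF a1[OF that] hk0] .
      then show ?thesis using h\<eta> tL hc
        by (intro divide_right_mono mult_right_mono) auto
    qed
    show "mono_on {0..\<eta>bar} (\<lambda>\<eta>1.
            let \<alpha>1 = (1 + \<eta>1) * (\<theta> - w1) / (2 * c);
                \<alpha>2 = (1 + k * \<alpha>1) * (1 + \<eta>bar) * (\<theta> - wL) / (2 * c)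
            in w1 * \<alpha>1 + wL * \<alpha>2)
        \<and> mono_on {0..\<eta>bar} (\<lambda>\<eta>1.
            let \<alpha>1 = (1 + \<eta>1) * (\<theta> - w1) / (2 * c) in w1 * \<alpha>1)"
      unfolding Let_def
    proof (intro conjI mono_onI)
      fix r s :: real assume "r \<le> s"
      show "w1 * ((1 + r) * (\<theta> - w1) / (2 * c)) \<le> w1 * ((1 + s) * (\<theta> - w1) / (2 * c))"
        using mult_left_mono[OF a1[OF \<open>r \<le> s\<close>] w1(1)] .
      show "w1 * ((1 + r) * (\<theta> - w1) / (2 * c)) +
          wL * ((1 + k * ((1 + r) * (\<theta> - w1) / (2 * c))) * (1 + \<eta>bar) * (\<theta> - wL) / (2 * c))
        \<le> w1 * ((1 + s) * (\<theta> - w1) / (2 * c)) +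
          wL * ((1 + k * ((1 + s) * (\<theta> - w1) / (2 * c))) * (1 + \<eta>bar) * (\<theta> - wL) / (2 * c))"
        using mult_left_mono[OF a1[OF \<open>r \<le> s\<close>] w1(1)] mult_left_mono[OF a2[OF \<open>r \<le> s\<close>] hw(1)]
        by (rule add_mono)
    qed
  qed
  show ?thesis
    using A B select_char[OF hc tL tH _ h\<eta> hk0 kH] select_char[OF hc tL tL _ h\<eta> hk0 kL]
    by blast
qed

end
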